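(* Let $M\ge1$, $h_1,\dots,h_M\ge0$, $P>0$, $\sigma^2>0$ and $\lambda\ge0$. Then the problem $\max_{0\le\alpha_m\le1,\ m=1,\dots,M}\ \log\Big(1+\frac{\sum_{m=1}^M\alpha_m h_mP}{\sigma^2}\Big)+\sum_{m=1}^M\lambda(1-\alpha_m)h_mP$ is equivalent to (in particular, has the same optimal value as) the problem $\max_{0\le\alpha\le1}\ \log\Big(1+\frac{\alpha\sum_{m=1}^M h_mP}{\sigma^2}\Big)+(1-\alpha)\sum_{m=1}^M\lambda h_mP.$
   Context: Here $h_m$ is the channel power gain to receive antenna $m$, $\alpha_m$ is the power splitting ratio at antenna $m$, and $\log$ is the natural logarithm. *)

theory Defs
  imports Complex_Main
begin

end

theory Submission
  imports Defs
begin

theorem lemma5p1: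
  fixes M :: nat and h :: "nat \<Rightarrow> real" and P \<sigma>2 lam :: real
  assumes "M \<ge> 1"
    and "\<And>m. m \<in> {1..M} \<Longrightarrow> h m \<ge> 0"
    and "P > 0" and "\<sigma>2 > 0" and "lam \<ge> 0"
  shows "(SUP \<alpha>\<in>{\<alpha> :: nat \<Rightarrow> real. \<forall>m\<in>{1..M}. 0 \<le> \<alpha> m \<and> \<alpha> m \<le> 1}.
            ln (1 + (\<Sum>m=1..M. \<alpha> m * h m * P) / \<sigma>2) + (\<Sum>m=1..M. lam * (1 - \<alpha> m) * h m * P))
       = (SUP \<alpha>\<in>{0..1::real}.
            ln (1 + \<alpha> * (\<Sum>m=1..M. h m * P) / \<sigma>2) + (1 - \<alpha>) * (\<Sum>m=1..M. lam * h m * P))"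
proof -
  define H where "H = (\<Sum>m=1..M. h m * P)"
  have L: "(\<Sum>m=1..M. lam * h m * P) = lam * H"
    unfolding H_def by (simp add: sum_distrib_left mult.assoc)
  let ?F = "\<lambda>\<alpha>::nat\<Rightarrow>real. ln (1 + (\<Sum>m=1..M. \<alpha> m * h m * P) / \<sigma>2) + (\<Sum>m=1..M. lam * (1 - \<alpha> m) * h m * P)"
  let ?G = "\<lambda>a::real. ln (1 + a * (\<Sum>m=1..M. h m * P) / \<sigma>2) + (1 - a) * (\<Sum>m=1..M. lam * h m * P)"
  let ?A = "{\<alpha> :: nat \<Rightarrow> real. \<forall>m\<in>{1..M}. 0 \<le> \<alpha> m \<and> \<alpha> m \<le> 1}"
  have eq: "?F ` ?A = ?G ` {0..1}"
  proof
    show "?F ` ?A \<subseteq> ?G ` {0..1}"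
    proof
      fix y assume "y \<in> ?F ` ?A"
      then obtain \<alpha> where a: "\<alpha> \<in> ?A" and y: "y = ?F \<alpha>" by blast
      define S where "S = (\<Sum>m=1..M. \<alpha> m * h m * P)"
      have S0: "0 \<le> S" unfolding S_def
        using a assms(2,3) by (intro sum_nonneg) auto
      have SH: "S \<le> H" unfolding S_def H_def
        using a assms(2,3) by (intro sum_mono) (auto intro!: mult_right_mono mult_left_le_one_le)
      have R: "(\<Sum>m=1..M. lam * (1 - \<alpha> m) * h m * P) = lam * (H - S)"
        unfolding S_def H_def by (simp add: sum_distrib_left sum_subtractf algebra_simps)
      obtain c where c: "c \<in> {0..1}" "c * H = S"
      proof (cases "H = 0")
        case True then show ?thesis using that[of 0] S0 SH by auto
      next
        case False then have "H > 0" using S0 SH by auto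
        then show ?thesis using that[of "S/H"] S0 SH by auto
      qed
      have "y = ln (1 + S / \<sigma>2) + lam * (H - S)" unfolding y R S_def by simp
      also have "\<dots> = ?G c" unfolding L H_def[symmetric] c(2)[symmetric]
        by (simp add: algebra_simps)
      finally have "y = ?G c" .
      then show "y \<in> ?G ` {0..1}" using c by blast
    qed
  next
    show "?G ` {0..1} \<subseteq> ?F ` ?A"
    proof
      fix y assume "y \<in> ?G ` {0..1}"
      then obtain c where c: "c \<in> {0..1}" and y: "y = ?G c" by blast
      have "(\<Sum>m=1..M. c * h m * P) = c * H" unfolding H_def
        by (simp add: sum_distrib_left mult.assoc)
      moreover have "(\<Sum>m=1..M. lam * (1 - c) * h m * P) = (1 - c) * (lam * H)" unfolding H_def
        by (simp add: sum_distrib_left algebra_simps)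
      ultimately have "y = ?F (\<lambda>_. c)" unfolding y using L by (simp add: H_def)
      moreover have "(\<lambda>_. c) \<in> ?A" using c by auto
      ultimately show "y \<in> ?F ` ?A" by (intro rev_image_eqI[where x="\<lambda>_. c"]) auto
    qed
  qed
  show ?thesis using eq by simp
qed

end
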